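(* In the algebra $\mathcal{B}_d$, for any nonnegative integers $a,b$ with $a+b=d+1$, $$f^a\binom{H_2}{b}=0=\binom{H_2}{b}e^a,\qquad e^a\binom{H_1}{b}=0=\binom{H_1}{b}f^a.$$ In particular $e^{d+1}=0=f^{d+1}$ in $\mathcal{B}_d$.
   Context: Fix an integer $d\ge 0$. $\mathcal{B}_d$ is the associative $\mathbb{Q}$-algebra with $1$ generated by $e,f,H_1,H_2$ subject to the relations $H_1H_2=H_2H_1$, $H_1e-eH_1=e$, $H_1f-fH_1=-f$, $H_2e-eH_2=-e$, $H_2f-fH_2=f$, $ef-fe=H_1-H_2$, $H_1+H_2=d$, and $H_1(H_1-1)\cdots(H_1-d)=0$. For an element $T$ and integer $m\ge 0$, $\binom{T}{m}=T(T-1)\cdots(T-m+1)/m!$. *)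

theory Defs
  imports Main
begin

definition is_Q_algebra :: "'a::ring_1 itself \<Rightarrow> bool" where
  "is_Q_algebra _ \<longleftrightarrow> (\<forall>n::nat. n > 0 \<longrightarrow> (\<exists>y::'a. of_nat n * y = 1 \<and> y * of_nat n = 1))"

definition nat_inv :: "nat \<Rightarrow> 'a::ring_1" where
  "nat_inv n = (THE y. of_nat n * y = 1 \<and> y * of_nat n = 1)"

fun ffact :: "'a::ring_1 \<Rightarrow> nat \<Rightarrow> 'a" where
  "ffact T 0 = 1"
| "ffact T (Suc m) = ffact T m * (T - of_nat m)"

definition binomT :: "'a::ring_1 \<Rightarrow> nat \<Rightarrow> 'a" where
  "binomT T m = nat_inv (fact m) * ffact T m"

definition B_rels :: "nat \<Rightarrow> 'a::ring_1 \<Rightarrow> 'a \<Rightarrow> 'a \<Rightarrow> 'a \<Rightarrow> bool" where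
  "B_rels d e f H1 H2 \<longleftrightarrow>
     H1 * H2 = H2 * H1 \<and>
     H1 * e - e * H1 = e \<and> H1 * f - f * H1 = - f \<and>
     H2 * e - e * H2 = - e \<and> H2 * f - f * H2 = f \<and>
     e * f - f * e = H1 - H2 \<and>
     H1 + H2 = of_nat d \<and>
     ffact H1 (Suc d) = 0"

end

theory Submission
  imports Defs
begin


lemma ffact_comm:
  fixes A T :: "'a::ring_1"
  assumes "A * T = T * A"
  shows "A * ffact T n = ffact T n * A"
proof (induction n)
  case 0 then show ?case by simp
next
  case (Suc n)
  have c: "A * (T - of_nat n) = (T - of_nat n) * A"
    using assms by (simp add: right_diff_distrib left_diff_distrib mult_of_nat_commute[of n A])
  have "A * ffact T (Suc n) = (A * ffact T n) * (T - of_nat n)" by (simp add: mult.assoc)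
  also have "... = ffact T n * (A * (T - of_nat n))" using Suc by (simp add: mult.assoc)
  also have "... = ffact T (Suc n) * A" using c by (simp add: mult.assoc)
  finally show ?case .
qed

lemma ffact_shift_left:
  fixes T x :: "'a::ring_1"
  assumes "T * x = x * (T + 1)"
  shows "ffact T n * x = x * ffact (T + 1) n"
proof (induction n)
  case 0 then show ?case by simp
next
  case (Suc n)
  have c: "(T - of_nat n) * x = x * (T + 1 - of_nat n)"
    using assms by (simp add: algebra_simps mult_of_nat_commute[of n x])
  have "ffact T (Suc n) * x = ffact T n * ((T - of_nat n) * x)" by (simp add: mult.assoc)
  also have "... = (ffact T n * x) * (T + 1 - of_nat n)" using c by (simp add: mult.assoc)
  also have "... = x * ffact (T + 1) (Suc n)" using Suc by (simp add: mult.assoc)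
  finally show ?case .
qed

lemma ffact_shift_right:
  fixes T x :: "'a::ring_1"
  assumes "x * T = (T + 1) * x"
  shows "x * ffact T n = ffact (T + 1) n * x"
proof (induction n)
  case 0 then show ?case by simp
next
  case (Suc n)
  have c: "x * (T - of_nat n) = (T + 1 - of_nat n) * x"
    using assms by (simp add: algebra_simps mult_of_nat_commute[of n x])
  have "x * ffact T (Suc n) = (x * ffact T n) * (T - of_nat n)" by (simp add: mult.assoc)
  also have "... = ffact (T + 1) n * (x * (T - of_nat n))" using Suc by (simp add: mult.assoc)
  also have "... = ffact (T + 1) (Suc n) * x" using c by (simp add: mult.assoc)
  finally show ?case .
qed

lemma ffact_pow_left:
  fixes H x :: "'a::ring_1"
  assumes "H * x = x * (H + 1)"
  shows "ffact H n * x ^ k = x ^ k * ffact (H + of_nat k) n"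
proof (induction k)
  case 0 then show ?case by simp
next
  case (Suc k)
  have c: "(H + of_nat k) * x = x * ((H + of_nat k) + 1)"
    using assms by (simp add: algebra_simps mult_of_nat_commute[of k x])
  have "ffact H n * x ^ Suc k = (ffact H n * x ^ k) * x" by (simp add: power_Suc2 mult.assoc power_commutes)
  also have "... = x ^ k * (ffact (H + of_nat k) n * x)" using Suc by (simp add: mult.assoc)
  also have "... = x ^ k * (x * ffact (H + of_nat k + 1) n)" using ffact_shift_left[OF c] by simp
  also have "... = x ^ Suc k * ffact (H + of_nat (Suc k)) n"
    by (simp add: mult.assoc[symmetric] power_commutes add_ac)
  finally show ?case .
qed

lemma ffact_pow_right:
  fixes H x :: "'a::ring_1"
  assumes "x * H = (H + 1) * x"
  shows "x ^ k * ffact H n = ffact (H + of_nat k) n * x ^ k"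
proof (induction k)
  case 0 then show ?case by simp
next
  case (Suc k)
  have c: "x * (H + of_nat k) = ((H + of_nat k) + 1) * x"
    using assms by (simp add: algebra_simps mult_of_nat_commute[of k x])
  have "x ^ Suc k * ffact H n = x * (x ^ k * ffact H n)" by (simp add: mult.assoc)
  also have "... = (x * ffact (H + of_nat k) n) * x ^ k" using Suc by (simp add: mult.assoc)
  also have "... = (ffact (H + of_nat k + 1) n * x) * x ^ k" using ffact_shift_right[OF c] by simp
  also have "... = ffact (H + of_nat (Suc k)) n * x ^ Suc k"
    by (simp add: mult.assoc add_ac)
  finally show ?case .
qed

lemma eigen_left:
  fixes W H :: "'a::ring_1"
  assumes "W * H = of_nat c * W"
  shows "W * ffact (H + of_nat k) n = ffact (of_nat (c + k)) n * W"
proof (induction n)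
  case 0 then show ?case by simp
next
  case (Suc n)
  have e: "W * (H + of_nat k - of_nat n) = (of_nat (c + k) - of_nat n) * W"
    using assms by (simp add: algebra_simps mult_of_nat_commute[of k W] mult_of_nat_commute[of n W])
  have "W * ffact (H + of_nat k) (Suc n) = (W * ffact (H + of_nat k) n) * (H + of_nat k - of_nat n)"
    by (simp add: mult.assoc)
  also have "... = ffact (of_nat (c + k)) n * (W * (H + of_nat k - of_nat n))"
    using Suc by (simp add: mult.assoc)
  also have "... = ffact (of_nat (c + k)) (Suc n) * W" using e by (simp add: mult.assoc)
  finally show ?case .
qed

lemma eigen_right:
  fixes W H :: "'a::ring_1"
  assumes "H * W = of_nat c * W"
  shows "ffact (H + of_nat k) n * W = ffact (of_nat (c + k)) n * W"
proof (induction n)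
  case 0 then show ?case by simp
next
  case (Suc n)
  have cm: "(H + of_nat k - of_nat n) * ffact (H + of_nat k) n
        = ffact (H + of_nat k) n * (H + of_nat k - of_nat n)"
    by (rule ffact_comm) (simp add: algebra_simps mult_of_nat_commute[of k H] mult_of_nat_commute[of n H] mult_of_nat_commute[of k "of_nat n"])
  have cm2: "(of_nat (c + k) - of_nat n) * ffact (of_nat (c + k)) n
        = ffact (of_nat (c + k)) n * ((of_nat (c + k) - of_nat n) :: 'a)"
    by (rule ffact_comm) (simp add: left_diff_distrib right_diff_distrib mult_of_nat_commute[of n "of_nat c"] mult_of_nat_commute[of n "of_nat k"] distrib_left distrib_right)
  have e: "(H + of_nat k - of_nat n) * W = (of_nat (c + k) - of_nat n) * W"
    using assms by (simp add: algebra_simps)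
  have "ffact (H + of_nat k) (Suc n) * W = (H + of_nat k - of_nat n) * (ffact (H + of_nat k) n * W)"
    using cm by (simp only: ffact.simps) (metis mult.assoc)
  also have "... = (H + of_nat k - of_nat n) * (ffact (of_nat (c + k)) n * W)"
    using Suc by simp
  also have "... = ffact (of_nat (c + k)) n * ((H + of_nat k - of_nat n) * W)"
  proof -
    have "(H + of_nat k - of_nat n) * ffact (of_nat (c + k)) n = ffact (of_nat (c + k)) n * (H + of_nat k - of_nat n)"
    proof -
      have "ffact (of_nat (c + k)) n * (H + of_nat k - of_nat n) = (H + of_nat k - of_nat n) * ffact (of_nat (c + k)) n"
        by (rule ffact_comm[symmetric]) (rule mult_of_nat_commute[symmetric])
      then show ?thesis by simp
    qed
    then show ?thesis by (simp add: mult.assoc[symmetric])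
  qed
  also have "... = ffact (of_nat (c + k)) n * ((of_nat (c + k) - of_nat n) * W)" using e by simp
  also have "... = ffact (of_nat (c + k)) (Suc n) * W" using cm2 by (simp add: mult.assoc[symmetric])
  finally show ?case .
qed

lemma ffact_nat_pos:
  "n \<le> m \<Longrightarrow> \<exists>k>0. ffact (of_nat m :: 'a::ring_1) n = of_nat k"
proof (induction n)
  case 0 then show ?case by (intro exI[of _ 1]) simp
next
  case (Suc n)
  then obtain k where k: "k > 0" "ffact (of_nat m :: 'a) n = of_nat k" by auto
  have "ffact (of_nat m :: 'a) (Suc n) = of_nat (k * (m - n))"
    using k Suc.prems by (simp add: of_nat_diff)
  moreover have "k * (m - n) > 0" using k Suc.prems by simp
  ultimately show ?case by blast
qed

lemma Q_cancel:
  fixes W :: "'a::ring_1"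
  assumes "is_Q_algebra TYPE('a)" "k > 0" "of_nat k * W = 0"
  shows "W = 0"
proof -
  obtain y :: 'a where y: "of_nat k * y = 1" "y * of_nat k = 1"
    using assms(1,2) unfolding is_Q_algebra_def by blast
  have "W = (y * of_nat k) * W" using y by simp
  also have "... = y * (of_nat k * W)" by (simp add: mult.assoc)
  finally show ?thesis using assms(3) by simp
qed

lemma top_cancel:
  fixes W :: "'a::ring_1"
  assumes "is_Q_algebra TYPE('a)" "ffact (of_nat m) m * W = 0"
  shows "W = 0"
proof -
  obtain k where "k > 0" "ffact (of_nat m :: 'a) m = of_nat k" using ffact_nat_pos[of m m] by auto
  then show ?thesis using Q_cancel[OF assms(1)] assms(2) by auto
qed

lemma core_left:
  fixes H x :: "'a::ring_1"
  assumes Q: "is_Q_algebra TYPE('a)" and cx: "H * x = x * (H + 1)"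
    and top: "ffact H (Suc d) = 0"
  shows "a \<le> Suc d \<Longrightarrow> x ^ a * ffact H (Suc d - a) = 0"
proof (induction a)
  case 0 then show ?case using top by simp
next
  case (Suc a)
  then have ad: "a \<le> d" by simp
  have IH: "x ^ a * ffact H (Suc (d - a)) = 0" using Suc ad by (simp add: Suc_diff_le)
  define W where "W = x ^ Suc a * ffact H (d - a)"
  have "W * (H - of_nat (d - a)) = x * (x ^ a * ffact H (Suc (d - a)))"
    unfolding W_def by (simp add: mult.assoc)
  then have "W * (H - of_nat (d - a)) = 0" using IH by simp
  then have WH: "W * H = of_nat (d - a) * W" by (simp add: algebra_simps mult_of_nat_commute[of "d-a" W])
  have HA: "ffact H (d - a) * (H + of_nat (Suc a)) = (H + of_nat (Suc a)) * ffact H (d - a)"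
  proof -
    have "(H + of_nat (Suc a)) * ffact H (d - a) = ffact H (d - a) * (H + of_nat (Suc a))"
      by (rule ffact_comm) (simp add: algebra_simps mult_of_nat_commute[of "Suc a" H] mult_of_nat_commute[of a H])
    then show ?thesis by simp
  qed
  have cm: "ffact H (d - a) * ffact (H + of_nat (Suc a)) (Suc d) = ffact (H + of_nat (Suc a)) (Suc d) * ffact H (d - a)"
    by (rule ffact_comm[OF HA])
  have "0 = ffact H (Suc d) * W" using top by simp
  also have "... = x ^ Suc a * (ffact (H + of_nat (Suc a)) (Suc d) * ffact H (d - a))"
    unfolding W_def using ffact_pow_left[OF cx, of "Suc d" "Suc a"] by (simp add: mult.assoc[symmetric])
  also have "... = W * ffact (H + of_nat (Suc a)) (Suc d)"
    unfolding W_def using cm by (simp add: mult.assoc)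
  also have "... = ffact (of_nat (d - a + Suc a)) (Suc d) * W" by (rule eigen_left[OF WH])
  also have "... = ffact (of_nat (Suc d)) (Suc d) * W" using ad by simp
  finally have "W = 0" using top_cancel[OF Q] by metis
  then show ?case unfolding W_def by simp
qed

lemma core_right:
  fixes H x :: "'a::ring_1"
  assumes Q: "is_Q_algebra TYPE('a)" and cx: "x * H = (H + 1) * x"
    and top: "ffact H (Suc d) = 0"
  shows "a \<le> Suc d \<Longrightarrow> ffact H (Suc d - a) * x ^ a = 0"
proof (induction a)
  case 0 then show ?case using top by simp
next
  case (Suc a)
  then have ad: "a \<le> d" by simp
  have IH: "ffact H (Suc (d - a)) * x ^ a = 0" using Suc ad by (simp add: Suc_diff_le)
  define W where "W = ffact H (d - a) * x ^ Suc a"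
  have cH: "(H - of_nat (d - a)) * ffact H (d - a) = ffact H (d - a) * (H - of_nat (d - a))"
    by (rule ffact_comm) (simp add: algebra_simps mult_of_nat_commute[of "d-a" H])
  have "(H - of_nat (d - a)) * W = (ffact H (Suc (d - a)) * x ^ a) * x"
    unfolding W_def using cH by (simp add: mult.assoc[symmetric] power_Suc2) (simp add: mult.assoc power_commutes)
  then have "(H - of_nat (d - a)) * W = 0" using IH by simp
  then have WH: "H * W = of_nat (d - a) * W" by (simp add: algebra_simps)
  have "0 = W * ffact H (Suc d)" using top by simp
  also have "... = ffact H (d - a) * (ffact (H + of_nat (Suc a)) (Suc d) * x ^ Suc a)"
    unfolding W_def using ffact_pow_right[OF cx, of "Suc a" "Suc d"] by (simp add: mult.assoc)
  also have "... = ffact (H + of_nat (Suc a)) (Suc d) * W"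
  proof -
    have HA: "ffact H (d - a) * (H + of_nat (Suc a)) = (H + of_nat (Suc a)) * ffact H (d - a)"
    proof -
      have "(H + of_nat (Suc a)) * ffact H (d - a) = ffact H (d - a) * (H + of_nat (Suc a))"
        by (rule ffact_comm) (simp add: algebra_simps mult_of_nat_commute[of "Suc a" H] mult_of_nat_commute[of a H])
      then show ?thesis by simp
    qed
    have cm: "ffact H (d - a) * ffact (H + of_nat (Suc a)) (Suc d) = ffact (H + of_nat (Suc a)) (Suc d) * ffact H (d - a)"
      by (rule ffact_comm[OF HA])
    show ?thesis unfolding W_def using cm by (simp add: mult.assoc[symmetric])
  qed
  also have "... = ffact (of_nat (d - a + Suc a)) (Suc d) * W" by (rule eigen_right[OF WH])
  also have "... = ffact (of_nat (Suc d)) (Suc d) * W" using ad by simp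
  finally have "W = 0" using top_cancel[OF Q] by metis
  then show ?case unfolding W_def by simp
qed


fun rf :: "'a::ring_1 \<Rightarrow> nat \<Rightarrow> 'a" where
  "rf T 0 = 1"
| "rf T (Suc n) = rf T n * (T + of_nat n)"

lemma ffact_neg: "ffact (- X :: 'a::ring_1) n = (-1) ^ n * rf X n"
proof (induction n)
  case 0 then show ?case by simp
next
  case (Suc n)
  have "ffact (- X) (Suc n) = (-1) ^ n * rf X n * (- (X + of_nat n))"
    using Suc by (simp add: algebra_simps)
  also have "... = (-1) ^ Suc n * rf X (Suc n)"
    by (simp add: mult.assoc algebra_simps)
  finally show ?case .
qed

lemma ffact_first: "ffact (T :: 'a::ring_1) (Suc n) = T * ffact (T - 1) n"
proof (induction n)
  case 0 then show ?case by simp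
next
  case (Suc n)
  have "ffact T (Suc (Suc n)) = T * ffact (T - 1) n * (T - of_nat (Suc n))"
    using Suc by simp
  also have "... = T * ffact (T - 1) (Suc n)"
    by (simp add: mult.assoc algebra_simps)
  finally show ?case .
qed

lemma rf_ffact: "rf (T :: 'a::ring_1) n = ffact (T + of_nat n - 1) n"
proof (induction n)
  case 0 then show ?case by simp
next
  case (Suc n)
  have cm: "(T + of_nat n) * ffact (T + of_nat n - 1) n = ffact (T + of_nat n - 1) n * (T + of_nat n)"
    by (rule ffact_comm) (simp add: algebra_simps mult_of_nat_commute[of n T])
  have "rf T (Suc n) = ffact (T + of_nat n - 1) n * (T + of_nat n)" using Suc by simp
  also have "... = (T + of_nat n) * ffact (T + of_nat n - 1) n" using cm by simp
  also have "... = ffact (T + of_nat n) (Suc n)" by (rule ffact_first[symmetric])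
  also have "... = ffact (T + of_nat (Suc n) - 1) (Suc n)" by (simp add: algebra_simps)
  finally show ?case .
qed

lemma top_H2:
  fixes H1 :: "'a::ring_1"
  assumes "ffact H1 (Suc d) = 0"
  shows "ffact (of_nat d - H1) (Suc d) = 0"
proof -
  have "of_nat d - H1 = - (H1 - of_nat d)" by simp
  then have "ffact (of_nat d - H1) (Suc d) = (-1) ^ Suc d * rf (H1 - of_nat d) (Suc d)"
    by (simp only: ffact_neg)
  also have "rf (H1 - of_nat d) (Suc d) = ffact H1 (Suc d)"
    by (simp add: rf_ffact del: ffact.simps rf.simps)
  finally show ?thesis using assms by simp
qed

lemma nat_inv_comm:
  assumes Q: "is_Q_algebra TYPE('a::ring_1)" and n: "n > 0"
  shows "nat_inv n * (z::'a) = z * nat_inv n"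
proof -
  obtain y :: 'a where y: "of_nat n * y = 1" "y * of_nat n = 1"
    using Q n unfolding is_Q_algebra_def by blast
  have ni: "nat_inv n = y" unfolding nat_inv_def
  proof (rule the_equality)
    show "of_nat n * y = 1 \<and> y * of_nat n = 1" using y by simp
  next
    fix y' :: 'a assume h: "of_nat n * y' = 1 \<and> y' * of_nat n = 1"
    have "y' = y' * (of_nat n * y)" using y by simp
    also have "... = (y' * of_nat n) * y" by (simp add: mult.assoc)
    finally show "y' = y" using h by simp
  qed
  have "y * z = y * z * (of_nat n * y)" using y by simp
  also have "... = y * (z * of_nat n) * y" by (simp add: mult.assoc)
  also have "... = y * (of_nat n * z) * y" by (simp only: mult_of_nat_commute)
  also have "... = (y * of_nat n) * z * y" by (simp add: mult.assoc)
  also have "... = z * y" using y by simp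
  finally show ?thesis using ni by simp
qed

theorem lemma4p3:
  fixes e f H1 H2 :: "'a::ring_1" and d a b :: nat
  assumes "is_Q_algebra TYPE('a)"
    and "B_rels d e f H1 H2"
    and "a + b = d + 1"
  shows "f ^ a * binomT H2 b = 0 \<and> binomT H2 b * e ^ a = 0 \<and>
         e ^ a * binomT H1 b = 0 \<and> binomT H1 b * f ^ a = 0 \<and>
         e ^ (d + 1) = 0 \<and> f ^ (d + 1) = 0"
proof -
  note Q = assms(1)
  have r1: "H1 * e - e * H1 = e" and r2: "H1 * f - f * H1 = - f"
    and r3: "H2 * e - e * H2 = - e" and r4: "H2 * f - f * H2 = f"
    and r5: "H1 + H2 = of_nat d" and top1: "ffact H1 (Suc d) = 0"
    using assms(2) unfolding B_rels_def by auto
  have H2e: "H2 = of_nat d - H1" using r5 by (simp add: algebra_simps)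
  have top2: "ffact H2 (Suc d) = 0" using top_H2[OF top1] H2e by simp
  have c1: "H1 * e = e * (H1 + 1)" using r1 by (simp add: algebra_simps)
  have c2: "f * H1 = (H1 + 1) * f" using r2 by (simp add: algebra_simps)
  have c3: "e * H2 = (H2 + 1) * e" using r3 by (simp add: algebra_simps)
  have c4: "H2 * f = f * (H2 + 1)" using r4 by (simp add: algebra_simps)
  have ab: "a \<le> Suc d" and bb: "b = Suc d - a" using assms(3) by auto
  have fb: "fact b > (0::nat)" by simp
  have ic: "\<And>z::'a. nat_inv (fact b) * z = z * nat_inv (fact b)"
    using nat_inv_comm[OF Q fb] by blast
  have z1: "f ^ a * ffact H2 b = 0" using core_left[OF Q c4 top2 ab] bb by simp
  have z2: "ffact H2 b * e ^ a = 0" using core_right[OF Q c3 top2 ab] bb by simp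
  have z3: "e ^ a * ffact H1 b = 0" using core_left[OF Q c1 top1 ab] bb by simp
  have z4: "ffact H1 b * f ^ a = 0" using core_right[OF Q c2 top1 ab] bb by simp
  have z5: "e ^ (d + 1) = 0" using core_left[OF Q c1 top1, of "Suc d"] by simp
  have z6: "f ^ (d + 1) = 0" using core_left[OF Q c4 top2, of "Suc d"] by simp
  have "f ^ a * binomT H2 b = nat_inv (fact b) * (f ^ a * ffact H2 b)"
    unfolding binomT_def by (metis ic mult.assoc)
  moreover have "e ^ a * binomT H1 b = nat_inv (fact b) * (e ^ a * ffact H1 b)"
    unfolding binomT_def by (metis ic mult.assoc)
  moreover have "binomT H2 b * e ^ a = nat_inv (fact b) * (ffact H2 b * e ^ a)"
    unfolding binomT_def by (simp add: mult.assoc)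
  moreover have "binomT H1 b * f ^ a = nat_inv (fact b) * (ffact H1 b * f ^ a)"
    unfolding binomT_def by (simp add: mult.assoc)
  ultimately show ?thesis using z1 z2 z3 z4 z5 z6 by simp
qed

end
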